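(* Let $n\ge 7$ be an integer. Every connected graph $G$ of order $n$ and size at most $\lfloor 3n/2\rfloor$ has an independent minimum vertex cut. Moreover, the bound is best possible: for every integer $n\ge 7$ there exists a connected graph of order $n$ and size $\lfloor 3n/2\rfloor+1$ which has no independent minimum vertex cut.
   Context: All graphs are finite and simple. The order of a graph is its number of vertices and the size is its number of edges. A vertex cut of a connected graph $G$ is a set $S\subset V(G)$ such that $G-S$ is disconnected. If $G$ has connectivity $k$, a vertex cut $S$ is called minimum if $|S|=k$. A vertex cut $S$ is called an independent vertex cut if $S$ is an independent set of $G$. *)

theory Defs
  imports Main
begin

definition simple_graph :: "'a set \<Rightarrow> 'a set set \<Rightarrow> bool" where
  "simple_graph V E \<longleftrightarrow> finite V \<and> (\<forall>e\<in>E. \<exists>u v. e = {u, v} \<and> u \<noteq> v \<and> u \<in> V \<and> v \<in> V)"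

definition order :: "'a set \<Rightarrow> 'a set set \<Rightarrow> nat" where
  "order V E = card V"

definition graph_size :: "'a set \<Rightarrow> 'a set set \<Rightarrow> nat" where
  "graph_size V E = card E"

definition reach_in :: "'a set set \<Rightarrow> 'a set \<Rightarrow> 'a \<Rightarrow> 'a \<Rightarrow> bool" where
  "reach_in E W u v \<longleftrightarrow> (\<lambda>x y. x \<in> W \<and> y \<in> W \<and> {x, y} \<in> E)\<^sup>*\<^sup>* u v"

definition connected_graph :: "'a set \<Rightarrow> 'a set set \<Rightarrow> bool" where
  "connected_graph V E \<longleftrightarrow> V \<noteq> {} \<and> (\<forall>u\<in>V. \<forall>v\<in>V. reach_in E V u v)"

definition vertex_cut :: "'a set \<Rightarrow> 'a set set \<Rightarrow> 'a set \<Rightarrow> bool" where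
  "vertex_cut V E S \<longleftrightarrow> S \<subseteq> V \<and>
     (\<exists>u\<in>V - S. \<exists>v\<in>V - S. \<not> reach_in E (V - S) u v)"

definition min_vertex_cut :: "'a set \<Rightarrow> 'a set set \<Rightarrow> 'a set \<Rightarrow> bool" where
  "min_vertex_cut V E S \<longleftrightarrow> vertex_cut V E S \<and> (\<forall>T. vertex_cut V E T \<longrightarrow> card S \<le> card T)"

definition independent_set :: "'a set \<Rightarrow> 'a set set \<Rightarrow> 'a set \<Rightarrow> bool" where
  "independent_set V E S \<longleftrightarrow> S \<subseteq> V \<and> (\<forall>u\<in>S. \<forall>v\<in>S. {u, v} \<notin> E)"

definition has_indep_min_cut :: "'a set \<Rightarrow> 'a set set \<Rightarrow> bool" where
  "has_indep_min_cut V E \<longleftrightarrow> (\<exists>S. min_vertex_cut V E S \<and> independent_set V E S)"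

end

theory Submission
  imports Defs
begin


definition nb :: "'a set set \<Rightarrow> 'a \<Rightarrow> 'a set" where
  "nb E v = {u. {v,u} \<in> E}"

lemma simple_edge: "simple_graph V E \<Longrightarrow> {x,y} \<in> E \<Longrightarrow> x \<noteq> y \<and> x \<in> V \<and> y \<in> V"
  unfolding simple_graph_def by (metis doubleton_eq_iff)

lemma edge_obtain:
  assumes "simple_graph V E" "e \<in> E"
  shows "\<exists>u v. e = {u,v} \<and> u \<noteq> v \<and> u \<in> V \<and> v \<in> V"
proof -
  have "\<forall>e\<in>E. \<exists>u v. e = {u,v} \<and> u \<noteq> v \<and> u \<in> V \<and> v \<in> V"
    using assms(1) unfolding simple_graph_def by (rule conjunct2)
  then show ?thesis using assms(2) by (rule bspec)
qed

lemma simple_noloop: "simple_graph V E \<Longrightarrow> {x} \<notin> E"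
  using simple_edge[of V E x x] by auto

lemma simple_finE: "simple_graph V E \<Longrightarrow> finite E"
proof -
  assume s: "simple_graph V E"
  have "E \<subseteq> Pow V"
  proof
    fix e assume "e \<in> E"
    then obtain u v where "e = {u,v}" "u \<in> V" "v \<in> V" using s unfolding simple_graph_def by metis
    then show "e \<in> Pow V" by simp
  qed
  moreover have "finite V" using s unfolding simple_graph_def by simp
  ultimately show ?thesis by (simp add: finite_subset)
qed

lemma nb_sub: "simple_graph V E \<Longrightarrow> nb E v \<subseteq> V"
proof
  fix u assume "simple_graph V E" "u \<in> nb E v"
  then show "u \<in> V" using simple_edge[of V E v u] unfolding nb_def by blast
qed

lemma nb_fin: "simple_graph V E \<Longrightarrow> finite (nb E v)"
  using nb_sub[of V E v] unfolding simple_graph_def using finite_subset by blast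

lemma nb_sym: "u \<in> nb E v \<longleftrightarrow> v \<in> nb E u"
  unfolding nb_def by (simp add: insert_commute)

lemma nb_notself: "simple_graph V E \<Longrightarrow> v \<notin> nb E v"
  unfolding nb_def using simple_noloop[of V E v] by simp

lemma reach_closed:
  assumes "reach_in E W p q" "p \<in> X"
    "\<And>s t. s \<in> X \<Longrightarrow> s \<in> W \<Longrightarrow> t \<in> W \<Longrightarrow> {s,t} \<in> E \<Longrightarrow> t \<in> X"
  shows "q \<in> X"
  using assms(1) unfolding reach_in_def
  by (induction rule: rtranclp_induct) (use assms in auto)

lemma reach_gen:
  assumes "reach_in E W p q" "\<And>x y. x \<in> W \<Longrightarrow> y \<in> W \<Longrightarrow> {x,y} \<in> E \<Longrightarrow> x \<in> W' \<and> y \<in> W' \<and> {x,y} \<in> E'"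
  shows "reach_in E' W' p q"
  using assms(1) unfolding reach_in_def
proof (induction rule: rtranclp_induct)
  case base then show ?case by simp
next
  case (step y z)
  have "(\<lambda>x y. x \<in> W' \<and> y \<in> W' \<and> {x, y} \<in> E') y z" using step(2) assms(2) by auto
  then show ?case using step(3) by (rule rtranclp.rtrancl_into_rtrancl[rotated])
qed

lemma reach_mono:
  assumes "reach_in E W p q" "W \<subseteq> W'" "E \<subseteq> E'"
  shows "reach_in E' W' p q"
  using reach_gen[OF assms(1)] assms(2,3) by blast

lemma reach_refl: "reach_in E W p p"
  unfolding reach_in_def by simp

lemma reach_edge: "x \<in> W \<Longrightarrow> y \<in> W \<Longrightarrow> {x,y} \<in> E \<Longrightarrow> reach_in E W x y"
  unfolding reach_in_def by auto

lemma reach_trans: "reach_in E W x y \<Longrightarrow> reach_in E W y z \<Longrightarrow> reach_in E W x z"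
  unfolding reach_in_def by auto

lemma reach_sym: "reach_in E W x y \<Longrightarrow> reach_in E W y x"
  unfolding reach_in_def
proof (induction rule: rtranclp_induct)
  case base then show ?case by simp
next
  case (step y z)
  have "(\<lambda>x y. x \<in> W \<and> y \<in> W \<and> {x, y} \<in> E) z y" using step(2) by (simp add: insert_commute)
  then show ?case using step(3) by (rule converse_rtranclp_into_rtranclp)
qed

lemma reach_step: "reach_in E W x y \<Longrightarrow> y \<in> W \<Longrightarrow> z \<in> W \<Longrightarrow> {y,z} \<in> E \<Longrightarrow> reach_in E W x z"
  using reach_trans reach_edge by metis

lemma reach_cong_E:
  assumes "reach_in E W p q" "\<And>x y. x \<in> W \<Longrightarrow> y \<in> W \<Longrightarrow> {x,y} \<in> E \<Longrightarrow> {x,y} \<in> E'"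
  shows "reach_in E' W p q"
  using assms(1) unfolding reach_in_def
proof (induction rule: rtranclp_induct)
  case base then show ?case by simp
next
  case (step y z)
  have "(\<lambda>x y. x \<in> W \<and> y \<in> W \<and> {x, y} \<in> E') y z" using step(2) assms(2) by auto
  then show ?case using step(3) by (rule rtranclp.rtrancl_into_rtrancl[rotated])
qed

lemma reroute_aux:
  assumes sg: "simple_graph V E" and w: "w \<in> W"
    and cl: "\<And>p q. p \<in> W \<Longrightarrow> q \<in> W \<Longrightarrow> p \<noteq> w \<Longrightarrow> q \<noteq> w \<Longrightarrow> p \<noteq> q \<Longrightarrow> {w,p} \<in> E \<Longrightarrow> {w,q} \<in> E \<Longrightarrow> {p,q} \<in> E"
    and r: "reach_in E W a b" and a: "a \<noteq> w"
  shows "reach_in E (W - {w}) a b \<or> (b = w \<and> (\<exists>p. p \<in> W \<and> p \<noteq> w \<and> {w,p} \<in> E \<and> reach_in E (W - {w}) a p))"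
  using r unfolding reach_in_def
proof (induction rule: rtranclp_induct)
  case base then show ?case by simp
next
  case (step y z)
  have yz: "y \<in> W" "z \<in> W" "{y,z} \<in> E" using step(2) by auto
  from step(3) show ?case
  proof
    assume ry: "(\<lambda>x y. x \<in> W - {w} \<and> y \<in> W - {w} \<and> {x, y} \<in> E)\<^sup>*\<^sup>* a y"
    show ?case
    proof (cases "z = w")
      case True
      have "y \<noteq> w" using True yz(3) simple_noloop[OF sg] by auto
      hence "{w,y} \<in> E" using True yz(3) by (simp add: insert_commute)
      then show ?thesis using True ry yz \<open>y \<noteq> w\<close> by (auto simp: reach_in_def)
    next
      case False
      show ?thesis
      proof (cases "y = w")
        case True
        have "a = y \<or> y \<in> W - {w}" using ry by (induction rule: rtranclp_induct) auto
        hence "a = w" using True by auto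
        with a show ?thesis by simp
      next
        case False
        then show ?thesis using ry yz \<open>z \<noteq> w\<close>
          by (simp add: rtranclp.rtrancl_into_rtrancl)
      qed
    qed
  next
    assume "y = w \<and> (\<exists>p. p \<in> W \<and> p \<noteq> w \<and> {w, p} \<in> E \<and> (\<lambda>x y. x \<in> W - {w} \<and> y \<in> W - {w} \<and> {x, y} \<in> E)\<^sup>*\<^sup>* a p)"
    then obtain p where y: "y = w" and p: "p \<in> W" "p \<noteq> w" "{w,p} \<in> E" "reach_in E (W - {w}) a p" unfolding reach_in_def by blast
    have zw: "z \<noteq> w" using y yz(3) simple_noloop[OF sg] by auto
    show ?case
    proof (cases "p = z")
      case True then show ?thesis using p unfolding reach_in_def by simp
    next
      case False
      have "{p,z} \<in> E" using cl[OF p(1) yz(2) p(2) zw False p(3)] yz(3) y by simp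
      hence "reach_in E (W - {w}) a z" using p zw yz(2) reach_step[OF p(4)] by auto
      then show ?thesis unfolding reach_in_def by simp
    qed
  qed
qed

lemma reroute:
  assumes sg: "simple_graph V E" and w: "w \<in> W"
    and cl: "\<And>p q. p \<in> W \<Longrightarrow> q \<in> W \<Longrightarrow> p \<noteq> w \<Longrightarrow> q \<noteq> w \<Longrightarrow> p \<noteq> q \<Longrightarrow> {w,p} \<in> E \<Longrightarrow> {w,q} \<in> E \<Longrightarrow> {p,q} \<in> E"
    and r: "reach_in E W a b" and a: "a \<noteq> w" and b: "b \<noteq> w"
  shows "reach_in E (W - {w}) a b"
  using reroute_aux[OF assms(1-5)] b by blast


lemma deg_edges:
  assumes sg: "simple_graph V E"
  shows "card (nb E v) = card {e\<in>E. v\<in>e}"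
proof -
  have "bij_betw (\<lambda>u. {v,u}) (nb E v) {e\<in>E. v\<in>e}"
    unfolding bij_betw_def
  proof
    show "inj_on (\<lambda>u. {v,u}) (nb E v)" by (auto simp: inj_on_def doubleton_eq_iff)
    show "(\<lambda>u. {v, u}) ` nb E v = {e \<in> E. v \<in> e}"
    proof
      show "(\<lambda>u. {v, u}) ` nb E v \<subseteq> {e \<in> E. v \<in> e}" unfolding nb_def by auto
      show "{e \<in> E. v \<in> e} \<subseteq> (\<lambda>u. {v, u}) ` nb E v"
      proof
        fix e assume e: "e \<in> {e \<in> E. v \<in> e}"
        then obtain a b where ab: "e = {a,b}" using edge_obtain[OF sg] by blast
        show "e \<in> (\<lambda>u. {v, u}) ` nb E v"
        proof (cases "v = a")
          case True then show ?thesis using e ab unfolding nb_def by auto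
        next
          case False
          hence "v = b" using e ab by auto
          hence "e = {v,a}" using ab by auto
          then show ?thesis using e unfolding nb_def by auto
        qed
      qed
    qed
  qed
  then show ?thesis by (rule bij_betw_same_card)
qed

lemma edge_card2: "simple_graph V E \<Longrightarrow> e \<in> E \<Longrightarrow> card e = 2 \<and> e \<subseteq> V"
  using edge_obtain[of V E e] by (auto simp: card_insert_if)

lemma handshake:
  assumes sg: "simple_graph V E"
  shows "(\<Sum>v\<in>V. card (nb E v)) = 2 * card E"
proof -
  have fV: "finite V" using sg simple_graph_def by blast
  have fE: "finite E" using sg simple_finE by blast
  have "(\<Sum>v\<in>V. card (nb E v)) = (\<Sum>v\<in>V. \<Sum>e\<in>E. (if v\<in>e then 1 else 0))"
  proof (rule sum.cong)
    fix v assume "v \<in> V"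
    have "card (nb E v) = card {e\<in>E. v\<in>e}" using deg_edges[OF sg] .
    also have "\<dots> = (\<Sum>e\<in>E. (if v\<in>e then 1 else 0))" by (subst sum.inter_filter[symmetric, OF fE]) simp
    finally show "card (nb E v) = (\<Sum>e\<in>E. (if v\<in>e then 1 else 0))" .
  qed simp
  also have "\<dots> = (\<Sum>e\<in>E. \<Sum>v\<in>V. (if v\<in>e then 1 else 0))" by (rule sum.swap)
  also have "\<dots> = (\<Sum>e\<in>E. 2)"
  proof (rule sum.cong)
    fix e assume e: "e \<in> E"
    have "(\<Sum>v\<in>V. (if v\<in>e then 1 else 0)) = (\<Sum>v\<in>{v\<in>V. v\<in>e}. 1::nat)" by (subst sum.inter_filter[OF fV]) simp
    also have "{v\<in>V. v\<in>e} = e" using edge_card2[OF sg e] by auto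
    also have "(\<Sum>v\<in>e. 1::nat) = 2" using edge_card2[OF sg e] by simp
    finally show "(\<Sum>v\<in>V. (if v\<in>e then 1 else 0)) = (2::nat)" .
  qed simp
  finally show ?thesis by simp
qed

lemma sum_ge_lemma:
  assumes "finite V" "\<forall>v\<in>V. c \<le> f v"
  shows "c * card V \<le> (\<Sum>v\<in>V. f v)"
  using sum_mono[of V "\<lambda>_. c" f] assms by (simp add: mult.commute)

lemma sum_gt_lemma:
  assumes "finite V" "\<forall>v\<in>V. c \<le> (f v::nat)" "w \<in> V" "c < f w"
  shows "c * card V < (\<Sum>v\<in>V. f v)"
proof -
  have "(\<Sum>v\<in>V. c) < (\<Sum>v\<in>V. f v)"
    using sum_strict_mono_ex1[of V "\<lambda>_. c" f] assms by auto
  then show ?thesis by (simp add: mult.commute)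
qed


definition nocut1 :: "'a set \<Rightarrow> 'a set set \<Rightarrow> bool" where
  "nocut1 V E \<longleftrightarrow> (\<forall>z\<in>V. \<forall>a\<in>V-{z}. \<forall>b\<in>V-{z}. reach_in E (V-{z}) a b)"

definition adj2 :: "'a set \<Rightarrow> 'a set set \<Rightarrow> bool" where
  "adj2 V E \<longleftrightarrow> (\<forall>a\<in>V. \<forall>b\<in>V. a \<noteq> b \<longrightarrow>
      (\<exists>p\<in>V-{a,b}. \<exists>q\<in>V-{a,b}. \<not> reach_in E (V-{a,b}) p q) \<longrightarrow> {a,b} \<in> E)"

definition condC :: "'a set \<Rightarrow> 'a set set \<Rightarrow> bool" where
  "condC V E \<longleftrightarrow> simple_graph V E \<and> connected_graph V E \<and> nocut1 V E \<and> adj2 V E"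

lemma adj2D:
  assumes "adj2 V E" "a \<in> V" "b \<in> V" "a \<noteq> b" "p \<in> V-{a,b}" "q \<in> V-{a,b}" "\<not> reach_in E (V-{a,b}) p q"
  shows "{a,b} \<in> E"
  using assms unfolding adj2_def by blast

lemma nocut1D:
  assumes "nocut1 V E" "z \<in> V" "a \<in> V" "b \<in> V" "a \<noteq> z" "b \<noteq> z"
  shows "reach_in E (V-{z}) a b"
  using assms unfolding nocut1_def by blast

lemma first_step:
  assumes "reach_in E W a b" "a \<noteq> b"
  shows "\<exists>y\<in>W. a \<in> W \<and> {a,y} \<in> E"
  using assms unfolding reach_in_def
  by (induction rule: converse_rtranclp_induct) auto

lemma pick_other:
  assumes "finite A" "card A < card V"
  shows "\<exists>z\<in>V. z \<notin> A"
proof (rule ccontr)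
  assume "\<not> ?thesis"
  hence "V \<subseteq> A" by blast
  hence "card V \<le> card A" using assms(1) card_mono by blast
  with assms show False by simp
qed

lemma card_le3: "card {a,b,c} \<le> 3"
  by (simp add: card_insert_if)

lemma card_le2: "card {a,b} \<le> 2"
  by (simp add: card_insert_if)

lemma reach_E_restrict:
  assumes "reach_in E W p q" "w \<notin> W"
  shows "reach_in {e\<in>E. w \<notin> e} W p q"
  by (rule reach_cong_E[OF assms(1)]) (use assms(2) in auto)

lemma small_cases:
  assumes C: "condC V E" and n: "card V \<le> 3"
  shows "int (2 * card E) \<ge> 3 * int (card V) + min 1 (int (card V) - 6)"
proof -
  have sg: "simple_graph V E" and conn: "connected_graph V E" and nc: "nocut1 V E"
    using C unfolding condC_def by auto
  have fV: "finite V" using sg unfolding simple_graph_def by simp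
  have fE: "finite E" using sg simple_finE by blast
  have Vne: "V \<noteq> {}" using conn unfolding connected_graph_def by simp
  have edge_of: "{a,b} \<in> E" if h: "a \<in> V" "b \<in> V" "a \<noteq> b" "reach_in E {a,b} a b" for a b
  proof -
    obtain y where "y \<in> {a,b}" "{a,y} \<in> E" using first_step[OF h(4) h(3)] by blast
    moreover have "y \<noteq> a" using \<open>{a,y} \<in> E\<close> simple_noloop[OF sg, of a] by auto
    ultimately show ?thesis by auto
  qed
  have "card V \<noteq> 0" using Vne fV by simp
  then consider "card V = 1" | "card V = 2" | "card V = 3" using n by linarith
  then show ?thesis
  proof cases
    case 1 then show ?thesis by simp
  next
    case 2
    then obtain a b where ab: "V = {a,b}" "a \<noteq> b" by (meson card_2_iff)
    have "reach_in E V a b" using conn ab unfolding connected_graph_def by auto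
    hence "{a,b} \<in> E" using edge_of ab by auto
    hence "card E \<noteq> 0" using fE by auto
    hence "card E \<ge> 1" by simp
    then show ?thesis using 2 by simp
  next
    case 3
    then obtain a b c where abc: "V = {a,b,c}" "a \<noteq> b" "a \<noteq> c" "b \<noteq> c" by (meson card_3_iff)
    have "reach_in E (V - {c}) a b" using nocut1D[OF nc, of c a b] abc by auto
    moreover have "V - {c} = {a,b}" using abc by auto
    ultimately have e1: "{a,b} \<in> E" using edge_of abc by auto
    have "reach_in E (V - {b}) a c" using nocut1D[OF nc, of b a c] abc by auto
    moreover have "V - {b} = {a,c}" using abc by auto
    ultimately have e2: "{a,c} \<in> E" using edge_of abc by auto
    have "reach_in E (V - {a}) b c" using nocut1D[OF nc, of a b c] abc by auto
    moreover have "V - {a} = {b,c}" using abc by auto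
    ultimately have e3: "{b,c} \<in> E" using edge_of abc by auto
    have "{{a,b},{a,c},{b,c}} \<subseteq> E" using e1 e2 e3 by simp
    hence "card {{a,b},{a,c},{b,c}} \<le> card E" using fE card_mono by blast
    moreover have "card {{a,b},{a,c},{b,c}} = 3" using abc by (simp add: doubleton_eq_iff)
    ultimately show ?thesis using 3 by simp
  qed
qed

lemma ear_bound:
  assumes "condC V E" "w \<in> V" "card (nb E w) \<le> 2"
  shows "int (2 * card E) \<ge> 3 * int (card V) + min 1 (int (card V) - 6)"
  using assms
proof (induction "card V" arbitrary: V E w rule: less_induct)
  case less
  have C: "condC V E" by fact
  have sg: "simple_graph V E" and conn: "connected_graph V E" and nc: "nocut1 V E" and a2: "adj2 V E"
    using C unfolding condC_def by auto
  have fV: "finite V" using sg unfolding simple_graph_def by simp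
  have fE: "finite E" using sg simple_finE by blast
  have wV: "w \<in> V" by fact
  show ?case
  proof (cases "card V \<le> 3")
    case True then show ?thesis using small_cases[OF C] by simp
  next
    case False
    hence n4: "card V \<ge> 4" by simp
    have fN: "finite (nb E w)" using nb_fin[OF sg] .
    have cardN: "card (nb E w) = 2"
    proof (rule ccontr)
      assume "card (nb E w) \<noteq> 2"
      hence c1: "card (nb E w) \<le> 1" using less.prems(3) by simp
      obtain x where x: "x \<in> V" "x \<noteq> w" "nb E w \<subseteq> {x}"
      proof (cases "nb E w = {}")
        case True
        obtain x where "x \<in> V" "x \<notin> {w}" using pick_other[of "{w}" V] n4 by auto
        then show ?thesis using that True by auto
      next
        case False
        hence "card (nb E w) = 1" using c1 fN by (simp add: le_Suc_eq)
        then obtain x where "nb E w = {x}" by (rule card_1_singletonE)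
        moreover have "x \<in> V" "x \<noteq> w" using calculation nb_sub[OF sg, of w] nb_notself[OF sg, of w] by auto
        ultimately show ?thesis using that by auto
      qed
      obtain z where z: "z \<in> V" "z \<notin> {w,x}" using pick_other[of "{w,x}" V] n4 card_le2[of w x] by force
      have "reach_in E (V - {x}) w z" using nocut1D[OF nc x(1) wV z(1)] x z by auto
      hence "z \<in> {w}"
      proof (rule reach_closed)
        show "w \<in> {w}" by simp
        fix s t assume "s \<in> {w}" "s \<in> V - {x}" "t \<in> V - {x}" "{s,t} \<in> E"
        hence "t \<in> nb E w" unfolding nb_def by auto
        with x \<open>t \<in> V - {x}\<close> show "t \<in> {w}" by auto
      qed
      with z show False by simp
    qed
    then obtain x y where xy: "nb E w = {x,y}" "x \<noteq> y" by (meson card_2_iff)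
    have xyV: "x \<in> V" "y \<in> V" "x \<noteq> w" "y \<noteq> w"
      using xy nb_sub[OF sg, of w] nb_notself[OF sg, of w] by auto
    have ewx: "{w,x} \<in> E" "{w,y} \<in> E" using xy unfolding nb_def by auto
    obtain z where z: "z \<in> V" "z \<notin> {w,x,y}" using pick_other[of "{w,x,y}" V] n4 card_le3[of w x y] by force
    have nr: "\<not> reach_in E (V - {x,y}) w z"
    proof
      assume "reach_in E (V - {x,y}) w z"
      hence "z \<in> {w}"
      proof (rule reach_closed)
        show "w \<in> {w}" by simp
        fix s t assume "s \<in> {w}" "s \<in> V - {x,y}" "t \<in> V - {x,y}" "{s,t} \<in> E"
        hence "t \<in> nb E w" unfolding nb_def by auto
        with xy \<open>t \<in> V - {x,y}\<close> show "t \<in> {w}" by auto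
      qed
      with z show False by simp
    qed
    have exy: "{x,y} \<in> E"
      using adj2D[OF a2 xyV(1,2) xy(2) _ _ nr] xyV wV z by auto
    define V' where "V' = V - {w}"
    define E' where "E' = {e\<in>E. w \<notin> e}"
    have Ew: "{e\<in>E. w \<in> e} = {{w,x},{w,y}}"
    proof
      show "{e\<in>E. w \<in> e} \<subseteq> {{w,x},{w,y}}"
      proof
        fix e assume e: "e \<in> {e\<in>E. w \<in> e}"
        obtain a b where ab: "e = {a,b}" using e edge_obtain[OF sg] by blast
        have "e = {w,a} \<or> e = {w,b}" using e ab by auto
        then obtain u where u: "e = {w,u}" by blast
        hence "u \<in> nb E w" using e unfolding nb_def by auto
        then show "e \<in> {{w,x},{w,y}}" using xy u by auto
      qed
      show "{{w,x},{w,y}} \<subseteq> {e\<in>E. w \<in> e}" using ewx by auto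
    qed
    have Esplit: "E = E' \<union> {{w,x},{w,y}}" "E' \<inter> {{w,x},{w,y}} = {}"
      using Ew unfolding E'_def by auto
    have fE': "finite E'" using fE unfolding E'_def by simp
    have c2: "card {{w,x},{w,y}} = 2" using xy(2) by (simp add: doubleton_eq_iff)
    have cardE: "card E = card E' + 2"
      using card_Un_disjoint[OF fE' _ Esplit(2)] Esplit(1) c2 by simp
    have cardV: "card V = card V' + 1" using wV fV n4 unfolding V'_def by simp
    have sg': "simple_graph V' E'"
      unfolding simple_graph_def
    proof
      show "finite V'" using fV unfolding V'_def by simp
      show "\<forall>e\<in>E'. \<exists>u v. e = {u, v} \<and> u \<noteq> v \<and> u \<in> V' \<and> v \<in> V'"
      proof
        fix e assume e: "e \<in> E'"
        then obtain u v where uv: "e = {u,v}" "u \<noteq> v" "u \<in> V" "v \<in> V" using edge_obtain[OF sg] unfolding E'_def by blast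
        then show "\<exists>u v. e = {u, v} \<and> u \<noteq> v \<and> u \<in> V' \<and> v \<in> V'" using e unfolding E'_def V'_def by auto
      qed
    qed
    have tr: "reach_in E' W p q" if "reach_in E W p q" "W \<subseteq> V'" for W p q
      using reach_E_restrict[OF that(1)] that(2) unfolding E'_def V'_def by auto
    have cl: "{p,q} \<in> E" if "p \<noteq> q" "{w,p} \<in> E" "{w,q} \<in> E" for p q
    proof -
      have "p \<in> {x,y}" "q \<in> {x,y}" using that xy unfolding nb_def by auto
      then show ?thesis using that(1) exy by (auto simp: insert_commute)
    qed
    have rr: "reach_in E' (W - {w}) a b" if "reach_in E W a b" "w \<in> W" "W \<subseteq> V" "a \<noteq> w" "b \<noteq> w" for W a b
    proof -
      have "reach_in E (W - {w}) a b" using reroute[OF sg that(2) _ that(1,4,5)] cl by blast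
      then show ?thesis using tr that(3) unfolding V'_def by blast
    qed
    have conn': "connected_graph V' E'"
      unfolding connected_graph_def
    proof
      show "V' \<noteq> {}" using cardV n4 by auto
      show "\<forall>u\<in>V'. \<forall>v\<in>V'. reach_in E' V' u v"
      proof (intro ballI)
        fix u v assume "u \<in> V'" "v \<in> V'"
        hence "reach_in E V u v" using conn unfolding connected_graph_def V'_def by auto
        from rr[OF this wV] show "reach_in E' V' u v" using \<open>u \<in> V'\<close> \<open>v \<in> V'\<close> unfolding V'_def by auto
      qed
    qed
    have nc': "nocut1 V' E'"
      unfolding nocut1_def
    proof (intro ballI)
      fix z a b assume h: "z \<in> V'" "a \<in> V' - {z}" "b \<in> V' - {z}"
      hence "reach_in E (V - {z}) a b" using nocut1D[OF nc] unfolding V'_def by auto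
      from rr[OF this] h wV have "reach_in E' (V - {z} - {w}) a b" unfolding V'_def by auto
      moreover have "V - {z} - {w} = V' - {z}" unfolding V'_def by auto
      ultimately show "reach_in E' (V' - {z}) a b" by simp
    qed
    have a2': "adj2 V' E'"
      unfolding adj2_def
    proof (intro ballI impI)
      fix a b assume h: "a \<in> V'" "b \<in> V'" "a \<noteq> b" "\<exists>p\<in>V' - {a, b}. \<exists>q\<in>V' - {a, b}. \<not> reach_in E' (V' - {a, b}) p q"
      then obtain p q where pq: "p \<in> V' - {a,b}" "q \<in> V' - {a,b}" "\<not> reach_in E' (V' - {a, b}) p q" by blast
      have "\<not> reach_in E (V - {a,b}) p q"
      proof
        assume "reach_in E (V - {a,b}) p q"
        from rr[OF this] h pq wV have "reach_in E' (V - {a,b} - {w}) p q" unfolding V'_def by auto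
        moreover have "V - {a,b} - {w} = V' - {a,b}" unfolding V'_def by auto
        ultimately show False using pq by simp
      qed
      hence "{a,b} \<in> E" using adj2D[OF a2, of a b p q] h pq unfolding V'_def by auto
      then show "{a,b} \<in> E'" using h unfolding E'_def V'_def by auto
    qed
    have C': "condC V' E'" using sg' conn' nc' a2' unfolding condC_def by simp
    have lt: "card V' < card V" using cardV by simp
    have IHres: "int (2 * card E') \<ge> 3 * int (card V') + min 0 (min 1 (int (card V') - 6))"
    proof (cases "\<exists>u\<in>V'. card (nb E' u) \<le> 2")
      case True
      then obtain u where "u \<in> V'" "card (nb E' u) \<le> 2" by blast
      from less.hyps[OF lt C' this] show ?thesis by simp
    next
      case False
      hence "\<forall>u\<in>V'. 3 \<le> card (nb E' u)" by auto
      hence "3 * card V' \<le> (\<Sum>u\<in>V'. card (nb E' u))" using sum_ge_lemma[of V' 3] sg' unfolding simple_graph_def by simp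
      also have "\<dots> = 2 * card E'" using handshake[OF sg'] .
      finally show ?thesis by simp
    qed
    show ?thesis using IHres cardE cardV by simp
  qed
qed


lemma cut_closed:
  assumes "S \<subseteq> V" "p \<in> X" "p \<in> V - S" "q \<in> V - S" "q \<notin> X"
    "\<And>s t. s \<in> X \<Longrightarrow> s \<in> V - S \<Longrightarrow> t \<in> V - S \<Longrightarrow> {s,t} \<in> E \<Longrightarrow> t \<in> X"
  shows "vertex_cut V E S"
proof -
  have "\<not> reach_in E (V - S) p q"
  proof
    assume "reach_in E (V - S) p q"
    hence "q \<in> X" using assms(2) by (rule reach_closed) (rule assms(6))
    with assms(5) show False by simp
  qed
  then show ?thesis unfolding vertex_cut_def using assms(1,3,4) by blast
qed

lemma nb_cut:
  assumes sg: "simple_graph V E" and w: "w \<in> V" and c: "card (nb E w) + 1 < card V"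
  shows "vertex_cut V E (nb E w)"
proof -
  have fN: "finite (nb E w)" using nb_fin[OF sg] .
  have "card (insert w (nb E w)) < card V" using c fN by (simp add: card_insert_if)
  then obtain q where q: "q \<in> V" "q \<notin> insert w (nb E w)" using pick_other[of "insert w (nb E w)" V] fN by auto
  show ?thesis
  proof (rule cut_closed[of _ _ w "{w}" q])
    show "nb E w \<subseteq> V" using nb_sub[OF sg] .
    show "w \<in> {w}" by simp
    show "w \<in> V - nb E w" using w nb_notself[OF sg] by simp
    show "q \<in> V - nb E w" "q \<notin> {w}" using q by auto
    fix s t assume "s \<in> {w}" "s \<in> V - nb E w" "t \<in> V - nb E w" "{s,t} \<in> E"
    then show "t \<in> {w}" unfolding nb_def by auto
  qed
qed

lemma third:
  assumes "finite N" "card N = 3" "x \<in> N" "y \<in> N" "x \<noteq> y"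
  shows "\<exists>z. z \<notin> {x,y} \<and> N = {x,y,z}"
proof -
  have "card (N - {x,y}) = 1" using assms by (simp add: card_Diff_subset)
  then obtain z where z: "N - {x,y} = {z}" by (rule card_1_singletonE)
  hence "N = {x,y,z}" using assms(3,4) by auto
  with z show ?thesis by auto
qed

lemma three_eq:
  assumes "finite N" "card N = 3" "x \<in> N" "y \<in> N" "z \<in> N" "x \<noteq> y" "x \<noteq> z" "y \<noteq> z"
  shows "N = {x,y,z}"
proof -
  have "{x,y,z} \<subseteq> N" using assms by simp
  moreover have "card {x,y,z} = 3" using assms by simp
  ultimately have "{x,y,z} = N" using card_subset_eq[OF assms(1)] assms(2) by simp
  then show ?thesis by simp
qed

lemma card4:
  assumes "finite N" "card N = 3" "x \<in> N" "y \<in> N" "z \<in> N" "t \<in> N"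
    "x \<noteq> y" "x \<noteq> z" "y \<noteq> z" "t \<noteq> x" "t \<noteq> y" "t \<noteq> z"
  shows False
proof -
  have "{x,y,z,t} \<subseteq> N" using assms by simp
  hence "card {x,y,z,t} \<le> card N" using assms(1) card_mono by blast
  moreover have "card {x,y,z,t} = 4" using assms by simp
  ultimately show False using assms(2) by simp
qed


lemma side_nb:
  assumes "\<not> reach_in E W p q" "W = V - {u,v}" "p \<in> W" "q \<in> W" "reach_in E (V - {v}) p q"
  shows "\<exists>a\<in>W. reach_in E W p a \<and> {a,u} \<in> E"
proof (rule ccontr)
  assume na: "\<not> ?thesis"
  have "q \<in> {z. z \<in> W \<and> reach_in E W p z}"
    using assms(5)
  proof (rule reach_closed)
    show "p \<in> {z. z \<in> W \<and> reach_in E W p z}" using assms(3) reach_refl by fast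
    fix s t assume h: "s \<in> {z. z \<in> W \<and> reach_in E W p z}" "s \<in> V - {v}" "t \<in> V - {v}" "{s,t} \<in> E"
    have "t \<noteq> u"
    proof
      assume "t = u"
      hence "{s,u} \<in> E" using h(4) by simp
      with h(1) na show False by blast
    qed
    hence tW: "t \<in> W" using h(3) assms(2) by auto
    have "reach_in E W p t" using reach_step[of E W p s t] h(1) tW h(4) by auto
    then show "t \<in> {z. z \<in> W \<and> reach_in E W p z}" using tW by simp
  qed
  with assms(1) show False by simp
qed

lemma indep2:
  assumes sg: "simple_graph V E" "a \<in> V" "b \<in> V" "{a,b} \<notin> E"
  shows "independent_set V E {a,b}"
  unfolding independent_set_def using assms simple_noloop[OF sg(1)] by (auto simp: insert_commute)

lemma cubic2:
  assumes sg: "simple_graph V E" and nc: "nocut1 V E"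
    and cub: "\<forall>w\<in>V. card (nb E w) = 3"
    and uv: "u \<in> V" "v \<in> V" "u \<noteq> v"
    and pq: "p \<in> V - {u,v}" "q \<in> V - {u,v}" and nr: "\<not> reach_in E (V - {u,v}) p q"
  shows "\<exists>T. vertex_cut V E T \<and> card T = 2 \<and> independent_set V E T"
proof (cases "{u,v} \<in> E")
  case False
  have "vertex_cut V E {u,v}" unfolding vertex_cut_def using uv pq nr by blast
  moreover have "card {u,v} = 2" using uv by simp
  ultimately show ?thesis using indep2[OF sg uv(1,2) False] by blast
next
  case uvE: True
  define W where "W = V - {u,v}"
  have Wvu: "W = V - {v,u}" unfolding W_def by auto
  have pW: "p \<in> W" and qW: "q \<in> W" using pq unfolding W_def by auto
  have nr': "\<not> reach_in E W p q" using nr unfolding W_def .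
  have nr'': "\<not> reach_in E W q p"
  proof
    assume "reach_in E W q p"
    hence "reach_in E W p q" by (rule reach_sym)
    with nr' show False by simp
  qed
  have r1: "reach_in E (V - {v}) p q" using nocut1D[OF nc uv(2)] pq by auto
  have r2: "reach_in E (V - {u}) p q" using nocut1D[OF nc uv(1)] pq by auto
  obtain uA where uA: "uA \<in> W" "reach_in E W p uA" "{uA,u} \<in> E"
    using side_nb[OF nr' W_def pW qW r1] by blast
  obtain uB where uB: "uB \<in> W" "reach_in E W q uB" "{uB,u} \<in> E"
    using side_nb[OF nr'' W_def qW pW reach_sym[OF r1]] by blast
  obtain vA where vA: "vA \<in> W" "reach_in E W p vA" "{vA,v} \<in> E"
    using side_nb[OF nr' Wvu pW qW r2] by blast
  obtain vB where vB: "vB \<in> W" "reach_in E W q vB" "{vB,v} \<in> E"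
    using side_nb[OF nr'' Wvu qW pW reach_sym[OF r2]] by blast
  have sep: "\<not> (reach_in E W p x \<and> reach_in E W q x)" for x
  proof
    assume h: "reach_in E W p x \<and> reach_in E W q x"
    have "reach_in E W p q" using reach_trans[OF conjunct1[OF h] reach_sym[OF conjunct2[OF h]]] .
    with nr' show False by simp
  qed
  have fin: "finite (nb E w)" for w using nb_fin[OF sg] .
  have uAu: "uA \<in> nb E u" "uB \<in> nb E u" "vA \<in> nb E v" "vB \<in> nb E v" "v \<in> nb E u" "u \<in> nb E v"
    using uA uB vA vB uvE unfolding nb_def by (auto simp: insert_commute)
  have uAB: "uA \<noteq> uB" using sep uA uB by blast
  have vAB: "vA \<noteq> vB" using sep vA vB by blast
  have cu: "card (nb E u) = 3" "card (nb E v) = 3" using cub uv by auto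
  have hAu: "s = uA" if "s \<in> W" "reach_in E W p s" "{s,u} \<in> E" for s
  proof (rule ccontr)
    assume "s \<noteq> uA"
    have "s \<in> nb E u" using that unfolding nb_def by (auto simp: insert_commute)
    moreover have "s \<noteq> uB" using sep that uB by blast
    ultimately show False using card4[OF fin cu(1) uAu(5) uAu(1) uAu(2) \<open>s \<in> nb E u\<close>]
          uA(1) uB(1) that(1) uAB \<open>s \<noteq> uA\<close> unfolding W_def by auto
  qed
  have hAv: "s = vA" if "s \<in> W" "reach_in E W p s" "{s,v} \<in> E" for s
  proof (rule ccontr)
    assume "s \<noteq> vA"
    have "s \<in> nb E v" using that unfolding nb_def by (auto simp: insert_commute)
    moreover have "s \<noteq> vB" using sep that vB by blast
    ultimately show False using card4[OF fin cu(2) uAu(6) uAu(3) uAu(4) \<open>s \<in> nb E v\<close>]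
          vA(1) vB(1) that(1) vAB \<open>s \<noteq> vA\<close> unfolding W_def by auto
  qed
  have uAV: "uA \<in> V" using uA(1) unfolding W_def by simp
  obtain a' where a': "a' \<in> nb E uA" "a' \<notin> {u,v}"
  proof (rule ccontr)
    assume "\<not> thesis"
    have "nb E uA \<subseteq> {u,v}"
    proof
      fix x assume "x \<in> nb E uA"
      show "x \<in> {u,v}"
      proof (rule ccontr)
        assume "x \<notin> {u,v}"
        with \<open>x \<in> nb E uA\<close> that \<open>\<not> thesis\<close> show False by blast
      qed
    qed
    hence "card (nb E uA) \<le> card {u,v}" by (rule card_mono[rotated]) simp
    also have "\<dots> \<le> 2" by (rule card_le2)
    finally show False using cub uAV by simp
  qed
  have a'W: "a' \<in> W" using a' nb_sub[OF sg, of uA] unfolding W_def by auto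
  have a'ne: "a' \<noteq> uA" using a' nb_notself[OF sg] by blast
  have a'r: "reach_in E W p a'" using reach_step[OF uA(2) uA(1) a'W] a' unfolding nb_def by simp
  define X where "X = {z. z \<in> W \<and> reach_in E W p z} - {uA}"
  have a'X: "a' \<in> X" unfolding X_def using a'W a'r a'ne by simp
  have uX: "u \<notin> X" unfolding X_def W_def by simp
  show ?thesis
  proof (cases "{uA,v} \<in> E")
    case True
    have eq: "uA = vA" using hAv[OF uA(1,2) True] .
    have cutv: "vertex_cut V E {uA}"
    proof (rule cut_closed[of _ _ a' X u])
      show "{uA} \<subseteq> V" using uAV by simp
      show "a' \<in> X" by (rule a'X)
      show "a' \<in> V - {uA}" using a'W a'ne unfolding W_def by simp
      show "u \<in> V - {uA}" using uv uA(1) unfolding W_def by auto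
      show "u \<notin> X" by (rule uX)
      fix s t assume h: "s \<in> X" "s \<in> V - {uA}" "t \<in> V - {uA}" "{s,t} \<in> E"
      have sW: "s \<in> W" "reach_in E W p s" "s \<noteq> uA" using h(1) unfolding X_def by auto
      show "t \<in> X"
      proof (cases "t = u")
        case True
        hence "s = uA" using hAu[OF sW(1,2)] h(4) by simp
        with sW show ?thesis by simp
      next
        case tu: False
        show ?thesis
        proof (cases "t = v")
          case True
          hence "s = uA" using hAv[OF sW(1,2)] h(4) eq by simp
          with sW show ?thesis by simp
        next
          case False
          hence tW: "t \<in> W" using tu h(3) unfolding W_def by auto
          have "reach_in E W p t" using reach_step[OF sW(2) sW(1) tW h(4)] .
          then show ?thesis using tW h(3) unfolding X_def by simp
        qed
      qed
    qed
    then obtain x y where "x \<in> V - {uA}" "y \<in> V - {uA}" "\<not> reach_in E (V - {uA}) x y"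
      unfolding vertex_cut_def by blast
    with nocut1D[OF nc uAV, of x y] show ?thesis by auto
  next
    case False
    have "vertex_cut V E {uA,v}"
    proof (rule cut_closed[of _ _ a' X u])
      show "{uA,v} \<subseteq> V" using uAV uv by simp
      show "a' \<in> X" by (rule a'X)
      show "a' \<in> V - {uA,v}" using a'W a'ne unfolding W_def by simp
      show "u \<in> V - {uA,v}" using uv uA(1) unfolding W_def by auto
      show "u \<notin> X" by (rule uX)
      fix s t assume h: "s \<in> X" "s \<in> V - {uA,v}" "t \<in> V - {uA,v}" "{s,t} \<in> E"
      have sW: "s \<in> W" "reach_in E W p s" "s \<noteq> uA" using h(1) unfolding X_def by auto
      show "t \<in> X"
      proof (cases "t = u")
        case True
        hence "s = uA" using hAu[OF sW(1,2)] h(4) by simp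
        with sW show ?thesis by simp
      next
        case tu: False
        hence tW: "t \<in> W" using h(3) unfolding W_def by auto
        have "reach_in E W p t" using reach_step[OF sW(2) sW(1) tW h(4)] .
        then show ?thesis using tW h(3) unfolding X_def by simp
      qed
    qed
    moreover have "card {uA,v} = 2" using uA(1) unfolding W_def by auto
    ultimately show ?thesis using indep2[OF sg uAV uv(2) False] by blast
  qed
qed


lemma no_shared:
  assumes sg: "simple_graph V E" and ns: "\<forall>T. vertex_cut V E T \<longrightarrow> 3 \<le> card T"
    and n: "card V \<ge> 7" and x: "x \<in> V"
    and nx: "nb E x = {y,z,p}" and ny: "nb E y = {x,z,p}"
  shows False
proof -
  have fV: "finite V" using sg unfolding simple_graph_def by simp
  have xn: "x \<notin> nb E x" "y \<notin> nb E y" using nb_notself[OF sg] by auto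
  have yV: "y \<in> V" using nx nb_sub[OF sg, of x] by auto
  have "card {x,y,z,p} \<le> 4" by (simp add: card_insert_if)
  then obtain q where q: "q \<in> V" "q \<notin> {x,y,z,p}" using pick_other[of "{x,y,z,p}" V] n by force
  have "vertex_cut V E {p,z}"
  proof (rule cut_closed[of _ _ x "{x,y}" q])
    show "{p,z} \<subseteq> V" using nx nb_sub[OF sg, of x] by auto
    show "x \<in> {x,y}" by simp
    show "x \<in> V - {p,z}" using x xn nx by auto
    show "q \<in> V - {p,z}" "q \<notin> {x,y}" using q by auto
    fix s t assume h: "s \<in> {x,y}" "s \<in> V - {p,z}" "t \<in> V - {p,z}" "{s,t} \<in> E"
    hence "t \<in> nb E s" unfolding nb_def by simp
    then show "t \<in> {x,y}" using h nx ny by auto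
  qed
  hence "3 \<le> card {p,z}" using ns by blast
  with card_le2[of p z] show False by simp
qed

lemma cand_cut:
  assumes sg: "simple_graph V E" and n: "card V \<ge> 7"
    and nx: "nb E x = {y,z,p}" and ny: "nb E y = {x,z,q}" and nz: "nb E z = {x,y,r}"
    and d: "x \<noteq> y" "x \<noteq> z" "y \<noteq> z" "p \<notin> {x,y,z}" "q \<notin> {x,y,z}" "r \<notin> {x,y,z}"
      "p \<noteq> q" "p \<noteq> r" "q \<noteq> r" and x: "x \<in> V"
  shows "vertex_cut V E {x,q,r} \<and> card {x,q,r} = 3 \<and> ({q,r} \<notin> E \<longrightarrow> independent_set V E {x,q,r})"
proof -
  have fV: "finite V" using sg unfolding simple_graph_def by simp
  have sub: "{y,z,p} \<subseteq> V" "{x,z,q} \<subseteq> V" "{x,y,r} \<subseteq> V"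
    using nx ny nz nb_sub[OF sg] by metis+
  have "card {x,y,z,q,r} \<le> 5" by (simp add: card_insert_if)
  then obtain w where w: "w \<in> V" "w \<notin> {x,y,z,q,r}" using pick_other[of "{x,y,z,q,r}" V] n by force
  have cut: "vertex_cut V E {x,q,r}"
  proof (rule cut_closed[of _ _ y "{y,z}" w])
    show "{x,q,r} \<subseteq> V" using sub x by auto
    show "y \<in> {y,z}" by simp
    show "y \<in> V - {x,q,r}" using sub d by auto
    show "w \<in> V - {x,q,r}" "w \<notin> {y,z}" using w by auto
    fix s t assume h: "s \<in> {y,z}" "s \<in> V - {x,q,r}" "t \<in> V - {x,q,r}" "{s,t} \<in> E"
    hence "t \<in> nb E s" unfolding nb_def by simp
    then show "t \<in> {y,z}" using h ny nz by auto
  qed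
  moreover have "card {x,q,r} = 3" using d by auto
  moreover have "{q,r} \<notin> E \<longrightarrow> independent_set V E {x,q,r}"
  proof
    assume qr: "{q,r} \<notin> E"
    have "q \<notin> nb E x" "r \<notin> nb E x" using nx d by auto
    hence "{x,q} \<notin> E" "{x,r} \<notin> E" unfolding nb_def by auto
    then show "independent_set V E {x,q,r}"
      unfolding independent_set_def using qr sub x simple_noloop[OF sg]
      by (auto simp: insert_commute)
  qed
  ultimately show ?thesis by simp
qed

lemma cubic3:
  assumes sg: "simple_graph V E" and conn: "connected_graph V E"
    and cub: "\<forall>w\<in>V. card (nb E w) = 3" and n: "card V \<ge> 7"
    and ns: "\<forall>T. vertex_cut V E T \<longrightarrow> 3 \<le> card T"
  shows "\<exists>T. vertex_cut V E T \<and> card T = 3 \<and> independent_set V E T"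
proof (rule ccontr)
  assume H: "\<not> ?thesis"
  have fV: "finite V" using sg unfolding simple_graph_def by simp
  have fin: "finite (nb E w)" for w using nb_fin[OF sg] .
  have inV: "w \<in> nb E u \<Longrightarrow> w \<in> V" for u w using nb_sub[OF sg] by blast
  obtain c where c: "c \<in> V" using conn unfolding connected_graph_def by blast
  have cut: "vertex_cut V E (nb E c)" using nb_cut[OF sg c] cub c n by simp
  have "\<not> independent_set V E (nb E c)" using H cut cub c by blast
  then obtain a b where ab: "a \<in> nb E c" "b \<in> nb E c" "{a,b} \<in> E"
    unfolding independent_set_def using nb_sub[OF sg] by blast
  have abne: "a \<noteq> b" using ab(3) simple_noloop[OF sg, of a] by auto
  have ac: "a \<noteq> c" "b \<noteq> c" using ab nb_notself[OF sg, of c] by auto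
  have aV: "a \<in> V" "b \<in> V" using ab inV by auto
  have m1: "b \<in> nb E a" "c \<in> nb E a" "a \<in> nb E b" "c \<in> nb E b"
    using ab unfolding nb_def by (auto simp: insert_commute)
  obtain a' where a': "a' \<notin> {b,c}" "nb E a = {b,c,a'}" using third[OF fin _ m1(1,2) ac(2)] cub aV by auto
  obtain b' where b': "b' \<notin> {a,c}" "nb E b = {a,c,b'}" using third[OF fin _ m1(3,4) ac(1)] cub aV by auto
  obtain c' where c': "c' \<notin> {a,b}" "nb E c = {a,b,c'}" using third[OF fin _ ab(1,2) abne] cub c by auto
  have self: "a' \<noteq> a" "b' \<noteq> b" "c' \<noteq> c" using a' b' c' nb_notself[OF sg] by (metis insertCI)+
  have d1: "a' \<noteq> b'"
  proof
    assume "a' = b'"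
    then show False using no_shared[OF sg ns n aV(1), of b c a'] a' b' by simp
  qed
  have d2: "a' \<noteq> c'"
  proof
    assume e: "a' = c'"
    have "nb E a = {c,b,a'}" "nb E c = {a,b,a'}" using a' c' e by auto
    then show False using no_shared[OF sg ns n aV(1), of c b a'] by simp
  qed
  have d3: "b' \<noteq> c'"
  proof
    assume e: "b' = c'"
    have "nb E b = {c,a,b'}" "nb E c = {b,a,b'}" using b' c' e by auto
    then show False using no_shared[OF sg ns n aV(2), of c a b'] by simp
  qed
  have dd: "a' \<notin> {a,b,c}" "b' \<notin> {a,b,c}" "c' \<notin> {a,b,c}" using a' b' c' self by auto
  have E1: "{b',c'} \<in> E"
  proof (rule ccontr)
    assume nE: "{b',c'} \<notin> E"
    have cc: "vertex_cut V E {a,b',c'} \<and> card {a,b',c'} = 3 \<and> ({b',c'} \<notin> E \<longrightarrow> independent_set V E {a,b',c'})"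
      by (rule cand_cut[OF sg n a'(2) b'(2) c'(2) abne ac(1) ac(2) dd d1 d2 d3 aV(1)])
    show False using H cc nE by blast
  qed
  have E2: "{a',c'} \<in> E"
  proof (rule ccontr)
    assume nE: "{a',c'} \<notin> E"
    have nc2: "nb E c = {b,a,c'}" using c' by auto
    have dd2: "b' \<notin> {b,a,c}" "a' \<notin> {b,a,c}" "c' \<notin> {b,a,c}" using dd by auto
    have cc: "vertex_cut V E {b,a',c'} \<and> card {b,a',c'} = 3 \<and> ({a',c'} \<notin> E \<longrightarrow> independent_set V E {b,a',c'})"
      by (rule cand_cut[OF sg n b'(2) a'(2) nc2 abne[symmetric] ac(2) ac(1) dd2 d1[symmetric] d3 d2 aV(2)])
    show False using H cc nE by blast
  qed
  have E3: "{a',b'} \<in> E"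
  proof (rule ccontr)
    assume nE: "{a',b'} \<notin> E"
    have na2: "nb E a = {c,b,a'}" "nb E b = {c,a,b'}" using a' b' by auto
    have dd3: "c' \<notin> {c,a,b}" "a' \<notin> {c,a,b}" "b' \<notin> {c,a,b}" using dd by auto
    have cc: "vertex_cut V E {c,a',b'} \<and> card {c,a',b'} = 3 \<and> ({a',b'} \<notin> E \<longrightarrow> independent_set V E {c,a',b'})"
      by (rule cand_cut[OF sg n c'(2) na2 ac(1)[symmetric] ac(2)[symmetric] abne dd3 d2[symmetric] d3[symmetric] d1 c])
    show False using H cc nE by blast
  qed
  have a'V: "a' \<in> V" "b' \<in> V" "c' \<in> V" using a' b' c' inV by auto
  have mem: "a \<in> nb E a'" "b' \<in> nb E a'" "c' \<in> nb E a'"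
             "b \<in> nb E b'" "a' \<in> nb E b'" "c' \<in> nb E b'"
             "c \<in> nb E c'" "a' \<in> nb E c'" "b' \<in> nb E c'"
    using a'(2) b'(2) c'(2) E1 E2 E3 unfolding nb_def by (auto simp: insert_commute)
  have na': "nb E a' = {a,b',c'}"
    by (rule three_eq[OF fin cub[rule_format, OF a'V(1)] mem(1,2,3)]) (use dd d3 in auto)
  have nb': "nb E b' = {b,a',c'}"
    by (rule three_eq[OF fin cub[rule_format, OF a'V(2)] mem(4,5,6)]) (use dd d2 in auto)
  have nc': "nb E c' = {c,a',b'}"
    by (rule three_eq[OF fin cub[rule_format, OF a'V(3)] mem(7,8,9)]) (use dd d1 in auto)
  define X where "X = {a,b,c,a',b',c'}"
  have "card X \<le> 6" unfolding X_def by (simp add: card_insert_if)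
  then obtain z where z: "z \<in> V" "z \<notin> X" using pick_other[of X V] n unfolding X_def by force
  have "reach_in E V a z" using conn aV z unfolding connected_graph_def by blast
  hence "z \<in> X"
  proof (rule reach_closed)
    show "a \<in> X" unfolding X_def by simp
    fix s t assume h: "s \<in> X" "s \<in> V" "t \<in> V" "{s,t} \<in> E"
    hence "t \<in> nb E s" unfolding nb_def by simp
    then show "t \<in> X" using h(1) a'(2) b'(2) c'(2) na' nb' nc' unfolding X_def by auto
  qed
  with z show False by simp
qed


lemma part1:
  assumes n7: "n \<ge> 7" and sg: "simple_graph V E" and conn: "connected_graph V E"
    and cV: "card V = n" and cE: "card E \<le> (3 * n) div 2"
  shows "has_indep_min_cut V E"
proof -
  have fV: "finite V" using sg unfolding simple_graph_def by simp
  have fE: "finite E" using sg simple_finE by blast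
  have m2: "2 * card E \<le> 3 * n" using cE by linarith
  have hs: "(\<Sum>v\<in>V. card (nb E v)) = 2 * card E" using handshake[OF sg] .
  obtain v where v: "v \<in> V" "card (nb E v) \<le> 3"
  proof (rule ccontr)
    assume "\<not> thesis"
    hence "\<forall>w\<in>V. 4 \<le> card (nb E w)" using that by force
    hence "4 * card V \<le> (\<Sum>v\<in>V. card (nb E v))" by (rule sum_ge_lemma[OF fV])
    with hs m2 cV n7 show False by simp
  qed
  have cutv: "vertex_cut V E (nb E v)" using nb_cut[OF sg v(1)] v(2) cV n7 by simp
  define P where "P k \<longleftrightarrow> (\<exists>S. vertex_cut V E S \<and> card S = k)" for k
  define \<kappa> where "\<kappa> = (LEAST k. P k)"
  have P3: "P (card (nb E v))" unfolding P_def using cutv by blast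
  have "P \<kappa>" unfolding \<kappa>_def using P3 by (rule LeastI)
  then obtain S0 where S0: "vertex_cut V E S0" "card S0 = \<kappa>" unfolding P_def by blast
  have kle: "\<kappa> \<le> card T" if "vertex_cut V E T" for T
    unfolding \<kappa>_def using that by (intro Least_le) (auto simp: P_def)
  have k3: "\<kappa> \<le> 3" using kle[OF cutv] v(2) by simp
  have S0V: "S0 \<subseteq> V" using S0 unfolding vertex_cut_def by simp
  show ?thesis
  proof (rule ccontr)
    assume H: "\<not> has_indep_min_cut V E"
    have nind: "\<not> independent_set V E T" if "vertex_cut V E T" "card T = \<kappa>" for T
    proof
      assume "independent_set V E T"
      moreover have "min_vertex_cut V E T" unfolding min_vertex_cut_def using that kle by simp
      ultimately show False using H unfolding has_indep_min_cut_def by blast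
    qed
    have k0: "\<kappa> \<noteq> 0"
    proof
      assume "\<kappa> = 0"
      hence "S0 = {}" using S0 S0V fV finite_subset by fastforce
      then obtain a b where "a \<in> V" "b \<in> V" "\<not> reach_in E V a b" using S0(1) unfolding vertex_cut_def by auto
      with conn show False unfolding connected_graph_def by blast
    qed
    have k1: "\<kappa> \<noteq> 1"
    proof
      assume "\<kappa> = 1"
      then obtain s where s: "S0 = {s}" using S0(2) by (metis card_1_singletonE)
      have "independent_set V E S0" unfolding independent_set_def using s S0V simple_noloop[OF sg] by auto
      with nind[OF S0] show False by simp
    qed
    have nc: "nocut1 V E"
      unfolding nocut1_def
    proof (intro ballI)
      fix z a b assume h: "z \<in> V" "a \<in> V - {z}" "b \<in> V - {z}"
      show "reach_in E (V - {z}) a b"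
      proof (rule ccontr)
        assume "\<not> reach_in E (V - {z}) a b"
        hence "vertex_cut V E {z}" unfolding vertex_cut_def using h by blast
        from kle[OF this] k0 k1 show False by simp
      qed
    qed
    have cubic_of: "\<forall>w\<in>V. card (nb E w) = 3" if h3: "\<forall>w\<in>V. 3 \<le> card (nb E w)"
    proof (rule ccontr)
      assume "\<not> (\<forall>w\<in>V. card (nb E w) = 3)"
      then obtain w where "w \<in> V" "3 < card (nb E w)" using h3 by force
      hence "3 * card V < (\<Sum>v\<in>V. card (nb E v))" using sum_gt_lemma[OF fV h3] by blast
      with hs m2 cV show False by simp
    qed
    consider "\<kappa> = 2" | "\<kappa> = 3" using k0 k1 k3 by linarith
    then show False
    proof cases
      case 1
      have a2: "adj2 V E"
        unfolding adj2_def
      proof (intro ballI impI)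
        fix a b assume h: "a \<in> V" "b \<in> V" "a \<noteq> b" "\<exists>p\<in>V - {a, b}. \<exists>q\<in>V - {a, b}. \<not> reach_in E (V - {a, b}) p q"
        have cut: "vertex_cut V E {a,b}" unfolding vertex_cut_def using h by blast
        show "{a,b} \<in> E"
        proof (rule ccontr)
          assume "{a,b} \<notin> E"
          hence "independent_set V E {a,b}" using indep2[OF sg h(1,2)] by simp
          with nind[OF cut] h(3) 1 show False by simp
        qed
      qed
      have C: "condC V E" unfolding condC_def using sg conn nc a2 by simp
      show False
      proof (cases "\<exists>w\<in>V. card (nb E w) \<le> 2")
        case True
        then obtain w where "w \<in> V" "card (nb E w) \<le> 2" by blast
        from ear_bound[OF C this] cV n7 m2 show False by simp
      next
        case False
        hence cub: "\<forall>w\<in>V. card (nb E w) = 3" using cubic_of by force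
        obtain u w where uw: "S0 = {u,w}" "u \<noteq> w" using S0(2) 1 by (meson card_2_iff)
        obtain p q where pq: "p \<in> V - {u,w}" "q \<in> V - {u,w}" "\<not> reach_in E (V - {u,w}) p q"
          using S0(1) uw unfolding vertex_cut_def by blast
        have "u \<in> V" "w \<in> V" using S0V uw by auto
        from cubic2[OF sg nc cub this uw(2) pq] obtain T where
          "vertex_cut V E T" "card T = 2" "independent_set V E T" by blast
        with nind 1 show False by blast
      qed
    next
      case 2
      have ns: "\<forall>T. vertex_cut V E T \<longrightarrow> 3 \<le> card T" using kle 2 by force
      have "\<forall>w\<in>V. 3 \<le> card (nb E w)"
      proof
        fix w assume w: "w \<in> V"
        show "3 \<le> card (nb E w)"
        proof (rule ccontr)
          assume "\<not> 3 \<le> card (nb E w)"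
          hence "card (nb E w) + 1 < card V" using cV n7 by simp
          from nb_cut[OF sg w this] ns \<open>\<not> 3 \<le> card (nb E w)\<close> show False by blast
        qed
      qed
      hence cub: "\<forall>w\<in>V. card (nb E w) = 3" by (rule cubic_of)
      from cubic3[OF sg conn cub _ ns] cV n7 obtain T where
          "vertex_cut V E T" "card T = 3" "independent_set V E T" by blast
      with nind 2 show False by blast
    qed
  qed
qed


definition nxt :: "nat \<Rightarrow> nat \<Rightarrow> nat" where
  "nxt k j = (if Suc j = k then 0 else Suc j)"

definition GE :: "nat \<Rightarrow> nat \<Rightarrow> nat set set" where
  "GE n k = (\<lambda>j. {j, nxt k j}) ` {..<k} \<union> (\<lambda>j. {k+j, k + nxt k j}) ` {..<k} \<union> (\<lambda>j. {j, k+j}) ` {..<k}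
     \<union> (\<lambda>e. {e, 0}) ` {2*k..<n} \<union> (\<lambda>e. {e, k}) ` {2*k..<n}"

lemma nxt_lt: "j < k \<Longrightarrow> nxt k j < k"
  unfolding nxt_def by auto

lemma nxt_ne: "k \<ge> 2 \<Longrightarrow> j < k \<Longrightarrow> nxt k j \<noteq> j"
  unfolding nxt_def by auto

lemma path_reach:
  assumes "i \<le> j" "\<And>t. i \<le> t \<Longrightarrow> t \<le> j \<Longrightarrow> c + t \<in> W"
    "\<And>t. i \<le> t \<Longrightarrow> t < j \<Longrightarrow> {c + t, c + Suc t} \<in> E"
  shows "reach_in E W (c + i) (c + j)"
  using assms
proof (induction j)
  case 0 then show ?case by (simp add: reach_refl)
next
  case (Suc j)
  show ?case
  proof (cases "i = Suc j")
    case True then show ?thesis by (simp add: reach_refl)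
  next
    case False
    hence ij: "i \<le> j" using Suc.prems(1) by simp
    have "reach_in E W (c + i) (c + j)" using Suc.IH[OF ij] Suc.prems by auto
    moreover have "c + j \<in> W" using Suc.prems(2)[of j] ij by simp
    moreover have "c + Suc j \<in> W" using Suc.prems(2)[of "Suc j"] ij by simp
    moreover have "{c + j, c + Suc j} \<in> E" using Suc.prems(3)[of j] ij by simp
    ultimately show ?thesis by (rule reach_step)
  qed
qed

lemma cyc_reach:
  assumes k: "k \<ge> 1"
    and edges: "\<And>j. j < k \<Longrightarrow> {c + j, c + nxt k j} \<in> E"
    and inW: "\<And>j. j < k \<Longrightarrow> j \<noteq> z \<Longrightarrow> c + j \<in> W"
    and a: "a < k" "a \<noteq> z" and b: "b < k" "b \<noteq> z"
  shows "reach_in E W (c + a) (c + b)"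
proof -
  have e2: "{c + t, c + Suc t} \<in> E" if "Suc t < k" for t
    using edges[of t] that unfolding nxt_def by auto
  define h where "h = (if z = k - 1 then 0 else k - 1)"
  have toh: "reach_in E W (c + x) (c + h)" if x: "x < k" "x \<noteq> z" for x
  proof (cases "z = k - 1")
    case True
    hence h0: "h = 0" unfolding h_def by simp
    have "reach_in E W (c + 0) (c + x)"
      by (rule path_reach) (use x True k inW e2 in auto)
    then show ?thesis using h0 reach_sym by simp
  next
    case zk: False
    hence hk: "h = k - 1" unfolding h_def by simp
    show ?thesis
    proof (cases "z < x")
      case True
      have "reach_in E W (c + x) (c + (k - 1))"
        by (rule path_reach) (use x True k inW e2 in auto)
      then show ?thesis using hk by simp
    next
      case False
      hence xz: "x < z" using x by simp
      have r0: "reach_in E W (c + 0) (c + x)"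
        by (rule path_reach) (use x xz k inW e2 in auto)
      have "{c + (k - 1), c + nxt k (k - 1)} \<in> E" using edges[of "k - 1"] k by simp
      moreover have "nxt k (k - 1) = 0" using k unfolding nxt_def by simp
      ultimately have ed: "{c + 0, c + (k - 1)} \<in> E" by (simp add: insert_commute)
      have "c + 0 \<in> W" using inW[of 0] k xz by simp
      moreover have "c + (k - 1) \<in> W" using inW[of "k - 1"] k zk by simp
      ultimately have "reach_in E W (c + 0) (c + (k - 1))" using ed by (rule reach_edge)
      with reach_sym[OF r0] have "reach_in E W (c + x) (c + (k - 1))" by (rule reach_trans)
      then show ?thesis using hk by simp
    qed
  qed
  show ?thesis using reach_trans[OF toh[OF a] reach_sym[OF toh[OF b]]] .
qed


lemma hub_conn:
  assumes "\<And>x. x \<in> W \<Longrightarrow> reach_in E W x h" "a \<in> W" "b \<in> W"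
  shows "reach_in E W a b"
  using reach_trans[OF assms(1)[OF assms(2)] reach_sym[OF assms(1)[OF assms(3)]]] .

lemma GE_edges:
  shows "j < k \<Longrightarrow> {j, nxt k j} \<in> GE n k"
    and "j < k \<Longrightarrow> {k+j, k + nxt k j} \<in> GE n k"
    and "j < k \<Longrightarrow> {j, k+j} \<in> GE n k"
    and "2*k \<le> e \<Longrightarrow> e < n \<Longrightarrow> {e,0} \<in> GE n k"
    and "2*k \<le> e \<Longrightarrow> e < n \<Longrightarrow> {e,k} \<in> GE n k"
  unfolding GE_def by auto

lemma prism_reach:
  assumes k3: "k \<ge> 3" and fR: "finite R" and cR: "card R \<le> 2"
    and a: "a < 2*k" "a \<notin> R" and b: "b < 2*k" "b \<notin> R"
  shows "reach_in (GE n k) ({0..<2*k} - R) a b"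
proof -
  define W where "W = {0..<2*k} - R"
  define E where "E = GE n k"
  have eo: "\<And>j. j < k \<Longrightarrow> {0 + j, 0 + nxt k j} \<in> E" using GE_edges(1) unfolding E_def by simp
  have ei: "\<And>j. j < k \<Longrightarrow> {k + j, k + nxt k j} \<in> E" using GE_edges(2) unfolding E_def by simp
  have er: "\<And>j. j < k \<Longrightarrow> {j, k + j} \<in> E" using GE_edges(3) unfolding E_def by simp
  have k1: "k \<ge> 1" using k3 by simp
  have aW: "a \<in> W" "b \<in> W" using a b unfolding W_def by auto
  have split: "\<exists>y. y < k \<and> x = k + y" if "x < 2*k" "\<not> x < k" for x
    using that by (intro exI[of _ "x - k"]) auto
  consider (A) "\<forall>j<k. j \<notin> R" | (B) "\<forall>j<k. k + j \<notin> R" | (C) s t where "s < k" "s \<in> R" "t < k" "k + t \<in> R"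
    by blast
  then show ?thesis
  proof cases
    case A
    have inW: "\<And>j. j < k \<Longrightarrow> j \<noteq> k \<Longrightarrow> 0 + j \<in> W" using A unfolding W_def by auto
    have "reach_in E W x 0" if x: "x \<in> W" for x
    proof (cases "x < k")
      case True
      have "reach_in E W (0 + x) (0 + 0)" by (rule cyc_reach[OF k1 eo inW]) (use True k1 in auto)
      then show ?thesis by simp
    next
      case False
      obtain y where y: "y < k" "x = k + y" using split[OF _ False] x unfolding W_def by auto
      have "reach_in E W x y" using reach_edge[of x W y E] x y er[of y] A unfolding W_def by (auto simp: insert_commute)
      moreover have "reach_in E W (0 + y) (0 + 0)" by (rule cyc_reach[OF k1 eo inW]) (use y k1 in auto)
      ultimately show ?thesis using reach_trans by simp
    qed
    then show ?thesis using hub_conn aW unfolding W_def E_def by metis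
  next
    case B
    have inW: "\<And>j. j < k \<Longrightarrow> j \<noteq> k \<Longrightarrow> k + j \<in> W" using B unfolding W_def by auto
    have "reach_in E W x (k + 0)" if x: "x \<in> W" for x
    proof (cases "x < k")
      case False
      obtain y where y: "y < k" "x = k + y" using split[OF _ False] x unfolding W_def by auto
      have "reach_in E W (k + y) (k + 0)" by (rule cyc_reach[OF k1 ei inW]) (use y k1 in auto)
      then show ?thesis using y by simp
    next
      case True
      have "reach_in E W x (k + x)" using reach_edge[of x W "k + x" E] x True er[of x] B unfolding W_def by auto
      moreover have "reach_in E W (k + x) (k + 0)" by (rule cyc_reach[OF k1 ei inW]) (use True k1 in auto)
      ultimately show ?thesis by (rule reach_trans)
    qed
    then show ?thesis using hub_conn aW unfolding W_def E_def by metis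
  next
    case C
    have ne: "s \<noteq> k + t" using C by simp
    have "{s, k+t} \<subseteq> R" using C by simp
    moreover have "card {s, k+t} = 2" using ne by simp
    ultimately have R: "R = {s, k+t}" using card_subset_eq[OF fR] cR by (metis card_mono fR le_antisym)
    obtain j where j: "j < k" "j \<noteq> s" "j \<noteq> t"
    proof -
      have "\<exists>j\<in>{0,1,2::nat}. j \<noteq> s \<and> j \<noteq> t" by auto
      then obtain j0 where "j0 \<in> {0,1,2::nat}" "j0 \<noteq> s" "j0 \<noteq> t" by blast
      moreover have "j0 < k" using calculation(1) k3 by auto
      ultimately show ?thesis using that by blast
    qed
    have inWo: "\<And>i. i < k \<Longrightarrow> i \<noteq> s \<Longrightarrow> 0 + i \<in> W" unfolding W_def R by auto
    have inWi: "\<And>i. i < k \<Longrightarrow> i \<noteq> t \<Longrightarrow> k + i \<in> W" unfolding W_def R using C by auto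
    have "reach_in E W x j" if x: "x \<in> W" for x
    proof (cases "x < k")
      case True
      have "x \<noteq> s" using x unfolding W_def R by auto
      have "reach_in E W (0 + x) (0 + j)" using cyc_reach[OF k1 eo inWo, where a=x and b=j] True j \<open>x \<noteq> s\<close> by simp
      then show ?thesis by simp
    next
      case False
      obtain y where y: "y < k" "x = k + y" using split[OF _ False] x unfolding W_def by auto
      have "y \<noteq> t" using x y unfolding W_def R by auto
      have "reach_in E W (k + y) (k + j)" using cyc_reach[OF k1 ei inWi, where a=y and b=j] y j \<open>y \<noteq> t\<close> by simp
      hence "reach_in E W x (k + j)" using y by simp
      moreover have "reach_in E W (k + j) j" using reach_edge[of "k + j" W j E] j er[of j] inWi[of j] inWo[of j]
        by (auto simp: insert_commute)
      ultimately show ?thesis by (rule reach_trans)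
    qed
    then show ?thesis using hub_conn aW unfolding W_def E_def by metis
  qed
qed


lemma GE_cases:
  assumes "x \<in> GE n k"
  obtains (O) j where "j < k" "x = {j, nxt k j}"
    | (I) j where "j < k" "x = {k+j, k + nxt k j}"
    | (R) j where "j < k" "x = {j, k+j}"
    | (E0) e where "2*k \<le> e" "e < n" "x = {e, 0}"
    | (Ek) e where "2*k \<le> e" "e < n" "x = {e, k}"
proof -
  from assms have "x \<in> (\<lambda>j. {j, nxt k j}) ` {..<k} \<or> x \<in> (\<lambda>j. {k+j, k + nxt k j}) ` {..<k} \<or> x \<in> (\<lambda>j. {j, k+j}) ` {..<k}
     \<or> x \<in> (\<lambda>e. {e, 0}) ` {2*k..<n} \<or> x \<in> (\<lambda>e. {e, k}) ` {2*k..<n}" unfolding GE_def by simp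
  then show thesis
  proof (elim disjE imageE)
    fix j assume "x = {j, nxt k j}" "j \<in> {..<k}" then show thesis using that(1)[of j] by simp
  next
    fix j assume "x = {k+j, k + nxt k j}" "j \<in> {..<k}" then show thesis using that(2)[of j] by simp
  next
    fix j assume "x = {j, k+j}" "j \<in> {..<k}" then show thesis using that(3)[of j] by simp
  next
    fix e assume "x = {e, 0}" "e \<in> {2*k..<n}" then show thesis using that(4)[of e] by simp
  next
    fix e assume "x = {e, k}" "e \<in> {2*k..<n}" then show thesis using that(5)[of e] by simp
  qed
qed

lemma full_reach:
  assumes k3: "k \<ge> 3" and nk: "2*k < n" and fR: "finite R" and cR: "card R \<le> 2"
    and nR: "\<not> (0 \<in> R \<and> k \<in> R)"
    and a: "a < n" "a \<notin> R" and b: "b < n" "b \<notin> R"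
  shows "reach_in (GE n k) ({0..<n} - R) a b"
proof -
  define W where "W = {0..<n} - R"
  define E where "E = GE n k"
  have "card R < card {0..<2*k}" using cR k3 by simp
  then obtain h where h: "h \<in> {0..<2*k}" "h \<notin> R" using pick_other[OF fR] by blast
  have sub: "{0..<2*k} - R \<subseteq> W" using nk unfolding W_def by auto
  have pr: "reach_in E W x h" if "x < 2*k" "x \<notin> R" for x
    using reach_mono[OF prism_reach[OF k3 fR cR that, of h n] sub] h unfolding E_def by auto
  have toh: "reach_in E W x h" if x: "x \<in> W" for x
  proof (cases "x < 2*k")
    case True then show ?thesis using pr x unfolding W_def by simp
  next
    case False
    show ?thesis
    proof (cases "0 \<in> R")
      case False
      have "{x,0} \<in> E" using GE_edges(4)[of k x n] \<open>\<not> x < 2*k\<close> x unfolding E_def W_def by simp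
      hence "reach_in E W x 0" using x False nk unfolding W_def by (intro reach_edge) auto
      moreover have "reach_in E W 0 h" using pr[of 0] False k3 by simp
      ultimately show ?thesis by (rule reach_trans)
    next
      case True
      hence kR: "k \<notin> R" using nR by simp
      have "{x,k} \<in> E" using GE_edges(5)[of k x n] \<open>\<not> x < 2*k\<close> x unfolding E_def W_def by simp
      hence "reach_in E W x k" using x kR nk unfolding W_def by (intro reach_edge) auto
      moreover have "reach_in E W k h" using pr[of k] kR k3 by simp
      ultimately show ?thesis by (rule reach_trans)
    qed
  qed
  have "a \<in> W" "b \<in> W" using a b unfolding W_def by auto
  from hub_conn[OF toh this] show ?thesis unfolding W_def E_def .
qed

lemma GE_simple:
  assumes k3: "k \<ge> 3" and nk: "2*k < n"
  shows "simple_graph {0..<n} (GE n k)"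
  unfolding simple_graph_def
proof (intro conjI ballI)
  show "finite {0..<n}" by simp
  fix x assume "x \<in> GE n k"
  then show "\<exists>u v. x = {u, v} \<and> u \<noteq> v \<and> u \<in> {0..<n} \<and> v \<in> {0..<n}"
  proof (cases rule: GE_cases)
    case (O j)
    then show ?thesis using nxt_lt[of j k] nxt_ne[of k j] k3 nk by (intro exI[of _ j] exI[of _ "nxt k j"]) auto
  next
    case (I j)
    then show ?thesis using nxt_lt[of j k] nxt_ne[of k j] k3 nk by (intro exI[of _ "k+j"] exI[of _ "k+nxt k j"]) auto
  next
    case (R j)
    then show ?thesis using k3 nk by (intro exI[of _ j] exI[of _ "k+j"]) auto
  next
    case (E0 e)
    then show ?thesis using k3 nk by (intro exI[of _ e] exI[of _ 0]) auto
  next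
    case (Ek e)
    then show ?thesis using k3 nk by (intro exI[of _ e] exI[of _ k]) auto
  qed
qed

lemma ear_only:
  assumes k3: "k \<ge> 3" and e: "{2*k, t} \<in> GE n k"
  shows "t = 0 \<or> t = k"
  using e
proof (cases rule: GE_cases)
  case (O j)
  then show ?thesis using nxt_lt[of j k] by (auto simp: doubleton_eq_iff)
next
  case (I j)
  then show ?thesis using nxt_lt[of j k] by (auto simp: doubleton_eq_iff)
next
  case (R j)
  then show ?thesis by (auto simp: doubleton_eq_iff)
next
  case (E0 e)
  then show ?thesis using k3 by (auto simp: doubleton_eq_iff)
next
  case (Ek e)
  then show ?thesis using k3 by (auto simp: doubleton_eq_iff)
qed


lemma GE_card:
  assumes k3: "k \<ge> 3" and nk: "2*k \<le> n"
  shows "card (GE n k) = 3*k + 2*(n - 2*k)"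
proof -
  define A1 where "A1 = (\<lambda>j. {j, nxt k j}) ` {..<k}"
  define A2 where "A2 = (\<lambda>j. {k+j, k + nxt k j}) ` {..<k}"
  define A3 where "A3 = (\<lambda>j. {j, k+j}) ` {..<k}"
  define A4 where "A4 = (\<lambda>e. {e, 0}) ` {2*k..<n}"
  define A5 where "A5 = (\<lambda>e. {e, k}) ` {2*k..<n}"
  have GE: "GE n k = A1 \<union> A2 \<union> A3 \<union> A4 \<union> A5" unfolding GE_def A1_def A2_def A3_def A4_def A5_def by simp
  have nl: "j < k \<Longrightarrow> nxt k j < k" for j by (rule nxt_lt)
  have i1: "inj_on (\<lambda>j. {j, nxt k j}) {..<k}"
    unfolding inj_on_def using k3 by (auto simp: doubleton_eq_iff nxt_def split: if_splits)
  have i2: "inj_on (\<lambda>j. {k+j, k + nxt k j}) {..<k}"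
    unfolding inj_on_def using k3 by (auto simp: doubleton_eq_iff nxt_def split: if_splits)
  have i3: "inj_on (\<lambda>j. {j, k+j}) {..<k}"
    unfolding inj_on_def by (auto simp: doubleton_eq_iff)
  have i4: "inj_on (\<lambda>e. {e, 0::nat}) {2*k..<n}"
    unfolding inj_on_def using k3 by (auto simp: doubleton_eq_iff)
  have i5: "inj_on (\<lambda>e. {e, k}) {2*k..<n}"
    unfolding inj_on_def using k3 by (auto simp: doubleton_eq_iff)
  have c1: "card A1 = k" unfolding A1_def using card_image[OF i1] by simp
  have c2: "card A2 = k" unfolding A2_def using card_image[OF i2] by simp
  have c3: "card A3 = k" unfolding A3_def using card_image[OF i3] by simp
  have c4: "card A4 = n - 2*k" unfolding A4_def using card_image[OF i4] by simp
  have c5: "card A5 = n - 2*k" unfolding A5_def using card_image[OF i5] by simp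
  have d12: "A1 \<inter> A2 = {}" unfolding A1_def A2_def using nl by (auto simp: doubleton_eq_iff)
  have d123: "(A1 \<union> A2) \<inter> A3 = {}" unfolding A1_def A2_def A3_def
    by (auto simp: doubleton_eq_iff) (metis nl add.commute less_add_eq_less not_add_less1)+
  have d1234: "(A1 \<union> A2 \<union> A3) \<inter> A4 = {}" unfolding A1_def A2_def A3_def A4_def using k3 by (auto simp: doubleton_eq_iff nxt_def split: if_splits)
  have d12345: "(A1 \<union> A2 \<union> A3 \<union> A4) \<inter> A5 = {}" unfolding A1_def A2_def A3_def A4_def A5_def using k3 by (auto simp: doubleton_eq_iff nxt_def split: if_splits)
  have f: "finite A1" "finite A2" "finite A3" "finite A4" "finite A5"
    unfolding A1_def A2_def A3_def A4_def A5_def by auto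
  have "card (A1 \<union> A2 \<union> A3 \<union> A4 \<union> A5) = card A1 + card A2 + card A3 + card A4 + card A5"
    using f d12 d123 d1234 d12345 by (simp add: card_Un_disjoint)
  then show ?thesis using GE c1 c2 c3 c4 c5 by simp
qed


lemma part2:
  fixes n :: nat
  assumes n7: "n \<ge> 7"
  shows "\<exists>(V :: nat set) (E :: nat set set).
               simple_graph V E \<and> connected_graph V E \<and> order V E = n \<and>
               graph_size V E = (3 * n) div 2 + 1 \<and> \<not> has_indep_min_cut V E"
proof -
  define k where "k = (n - 1) div 2"
  have k3: "k \<ge> 3" and nk: "2*k < n" and nk2: "n \<le> 2*k + 2" using n7 unfolding k_def by auto
  define V where "V = {0..<n}"
  define E where "E = GE n k"
  have sg: "simple_graph V E" unfolding V_def E_def using GE_simple[OF k3 nk] .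
  have fr: "reach_in E (V - R) a b" if "finite R" "card R \<le> 2" "\<not> (0 \<in> R \<and> k \<in> R)" "a \<in> V - R" "b \<in> V - R" for R a b
    using full_reach[OF k3 nk that(1,2,3)] that(4,5) unfolding V_def E_def by auto
  have conn: "connected_graph V E"
    unfolding connected_graph_def
  proof
    show "V \<noteq> {}" unfolding V_def using n7 by auto
    show "\<forall>u\<in>V. \<forall>v\<in>V. reach_in E V u v" using fr[of "{}"] by auto
  qed
  have ord: "order V E = n" unfolding order_def V_def by simp
  have "card E = 3*k + 2*(n - 2*k)" unfolding E_def using GE_card[OF k3] nk by simp
  also have "\<dots> = (3 * n) div 2 + 1"
  proof (cases "n = 2*k + 1")
    case True then show ?thesis by simp
  next
    case False
    hence "n = 2*k + 2" using nk nk2 by simp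
    then show ?thesis by simp
  qed
  finally have sz: "graph_size V E = (3 * n) div 2 + 1" unfolding graph_size_def .
  have e0k: "{0,k} \<in> E" using GE_edges(3)[of 0 k n] k3 unfolding E_def by simp
  have cut0k: "vertex_cut V E {0,k}"
  proof (rule cut_closed[of _ _ "2*k" "{2*k}" 1])
    show "{0,k} \<subseteq> V" unfolding V_def using nk by auto
    show "2*k \<in> {2*k}" by simp
    show "2*k \<in> V - {0,k}" unfolding V_def using nk k3 by auto
    show "1 \<in> V - {0,k}" "1 \<notin> {2*k}" unfolding V_def using nk k3 by auto
    fix s t assume h: "s \<in> {2*k}" "s \<in> V - {0,k}" "t \<in> V - {0,k}" "{s,t} \<in> E"
    hence "t = 0 \<or> t = k" using ear_only[OF k3, of t n] unfolding E_def by simp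
    with h show "t \<in> {2*k}" by simp
  qed
  have "\<not> has_indep_min_cut V E"
  proof
    assume "has_indep_min_cut V E"
    then obtain S where S: "min_vertex_cut V E S" "independent_set V E S" unfolding has_indep_min_cut_def by blast
    have Sc: "vertex_cut V E S" and cS: "card S \<le> card {0,k}" using S(1) cut0k unfolding min_vertex_cut_def by auto
    have cS2: "card S \<le> 2" using cS card_le2[of 0 k] by simp
    have SV: "S \<subseteq> V" using Sc unfolding vertex_cut_def by simp
    have fS: "finite S" using SV finite_subset unfolding V_def by blast
    show False
    proof (cases "0 \<in> S \<and> k \<in> S")
      case True
      then show False using S(2) e0k unfolding independent_set_def by blast
    next
      case False
      obtain p q where "p \<in> V - S" "q \<in> V - S" "\<not> reach_in E (V - S) p q" using Sc unfolding vertex_cut_def by blast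
      with fr[OF fS cS2 False] show False by blast
    qed
  qed
  then show ?thesis using sg conn ord sz by blast
qed


theorem theorem3:
  shows "(\<forall>(V :: 'a set) (E :: 'a set set) n.
            n \<ge> 7 \<and> simple_graph V E \<and> connected_graph V E \<and> order V E = n \<and>
            graph_size V E \<le> (3 * n) div 2 \<longrightarrow> has_indep_min_cut V E)
       \<and> (\<forall>n::nat. n \<ge> 7 \<longrightarrow>
            (\<exists>(V :: nat set) (E :: nat set set).
               simple_graph V E \<and> connected_graph V E \<and> order V E = n \<and>
               graph_size V E = (3 * n) div 2 + 1 \<and> \<not> has_indep_min_cut V E))"
proof
  show "\<forall>(V :: 'a set) (E :: 'a set set) n.
            n \<ge> 7 \<and> simple_graph V E \<and> connected_graph V E \<and> order V E = n \<and>
            graph_size V E \<le> (3 * n) div 2 \<longrightarrow> has_indep_min_cut V E"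
  proof (intro allI impI)
    fix V :: "'a set" and E :: "'a set set" and n :: nat
    assume h: "n \<ge> 7 \<and> simple_graph V E \<and> connected_graph V E \<and> order V E = n \<and>
            graph_size V E \<le> (3 * n) div 2"
    then show "has_indep_min_cut V E"
      using part1[of n V E] unfolding order_def graph_size_def by blast
  qed
next
  show "\<forall>n::nat. n \<ge> 7 \<longrightarrow>
            (\<exists>(V :: nat set) (E :: nat set set).
               simple_graph V E \<and> connected_graph V E \<and> order V E = n \<and>
               graph_size V E = (3 * n) div 2 + 1 \<and> \<not> has_indep_min_cut V E)"
    using part2 by blast
qed

end
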